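(* Let $\mathbb{X}$ be a separable metric space which is a Baire space, $f:\mathbb{X}\to\mathbb{X}$ continuous, and $\mathbb{X}_0=\{x\in\mathbb{X}:\overline{W_f^s(x)}=\mathbb{X}\}$. Then, generically on $\mathbb{X}$, $$\mho_f(x)\supset\{\mu\in\mathcal{M}^1(f):\beta_f(\mu)\cap\mathbb{X}_0\ne\emptyset\}\supset\{\mu\in\mathcal{M}^1_e(f):\mu(\mathbb{X}_0)>0\}.$$
   Context: Baire space: countable intersections of open dense sets are dense; generically: except on a meager set (countable union of nowhere dense sets). $W_f^s(x)=\{y:\lim_n d(f^n(y),f^n(x))=0\}$. $\mathcal{M}^1(f)$ ($\mathcal{M}^1_e(f)$): $f$-invariant (ergodic invariant) Borel probabilities. $\mho_f(x)$, the statistical spectrum of $x$, is the set of accumulation points in the weak* topology of $\frac1n\sum_{j=0}^{n-1}\delta_{f^j(x)}$. The basin of $\mu$ is $\beta_f(\mu)=\{x:\frac1n\sum_{j=0}^{n-1}\delta_{f^j(x)}\to\mu\text{ weak*}\}$. *)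

theory Defs
  imports "HOL-Probability.Probability"
begin

definition baire_space :: "'a::topological_space itself \<Rightarrow> bool" where
  "baire_space _ \<longleftrightarrow>
     (\<forall>\<U> :: 'a set set. countable \<U> \<and> (\<forall>U\<in>\<U>. open U \<and> closure U = UNIV)
        \<longrightarrow> closure (\<Inter>\<U>) = UNIV)"

definition nowhere_dense :: "'a::topological_space set \<Rightarrow> bool" where
  "nowhere_dense S \<longleftrightarrow> interior (closure S) = {}"

definition meager :: "'a::topological_space set \<Rightarrow> bool" where
  "meager S \<longleftrightarrow> (\<exists>\<F>. countable \<F> \<and> (\<forall>T\<in>\<F>. nowhere_dense T) \<and> S \<subseteq> \<Union>\<F>)"

definition generically :: "('a::topological_space \<Rightarrow> bool) \<Rightarrow> bool" where
  "generically P \<longleftrightarrow> meager {x. \<not> P x}"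

definition stable_set :: "('a::metric_space \<Rightarrow> 'a) \<Rightarrow> 'a \<Rightarrow> 'a set" where
  "stable_set f x = {y. (\<lambda>n. dist ((f ^^ n) y) ((f ^^ n) x)) \<longlonglongrightarrow> 0}"

definition borel_probs :: "'a::topological_space measure set" where
  "borel_probs = {M. prob_space M \<and> sets M = sets borel}"

definition invariant_probs :: "('a::topological_space \<Rightarrow> 'a) \<Rightarrow> 'a measure set" where
  "invariant_probs f = {M \<in> borel_probs.
      \<forall>A \<in> sets borel. measure M (f -` A) = measure M A}"

definition ergodic_probs :: "('a::topological_space \<Rightarrow> 'a) \<Rightarrow> 'a measure set" where
  "ergodic_probs f = {M \<in> invariant_probs f.
      \<forall>A \<in> sets borel. f -` A = A \<longrightarrow> measure M A = 0 \<or> measure M A = 1}"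

text \<open>Bounded continuous real test functions (defining the weak* topology).\<close>
definition bcontinuous :: "('a::topological_space \<Rightarrow> real) set" where
  "bcontinuous = {g. continuous_on UNIV g \<and> bounded (range g)}"

text \<open>Integral of g against the empirical measure
  (1/n) \<Sum>_{j<n} \<delta>_{f^j x}.\<close>
definition emp_avg :: "('a \<Rightarrow> 'a) \<Rightarrow> 'a \<Rightarrow> nat \<Rightarrow> ('a \<Rightarrow> real) \<Rightarrow> real" where
  "emp_avg f x n g = (\<Sum>j<n. g ((f ^^ j) x)) / real n"

text \<open>Statistical spectrum: weak* accumulation points of the empirical measures,
  i.e. every basic weak* neighbourhood of \<mu> (finitely many bounded continuous
  test functions, radius \<epsilon>) contains the n-th empirical measure for infinitely many n.\<close>
definition stat_spectrum :: "('a::topological_space \<Rightarrow> 'a) \<Rightarrow> 'a \<Rightarrow> 'a measure set" where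
  "stat_spectrum f x = {\<mu> \<in> borel_probs.
      \<forall>G e. finite G \<and> G \<subseteq> bcontinuous \<and> e > 0 \<longrightarrow>
        (\<exists>\<^sub>F n in sequentially. \<forall>g\<in>G. \<bar>emp_avg f x n g - integral\<^sup>L \<mu> g\<bar> < e)}"

definition basin :: "('a::topological_space \<Rightarrow> 'a) \<Rightarrow> 'a measure \<Rightarrow> 'a set" where
  "basin f \<mu> = {x. \<forall>g\<in>bcontinuous. (\<lambda>n. emp_avg f x n g) \<longlonglongrightarrow> integral\<^sup>L \<mu> g}"

text \<open>Outer measure positivity: S is not contained in any measurable null set
  (coincides with measure M S > 0 for measurable S).\<close>
definition outer_pos :: "'a measure \<Rightarrow> 'a set \<Rightarrow> bool" where
  "outer_pos M S \<longleftrightarrow> \<not> (\<exists>N\<in>sets M. S \<subseteq> N \<and> measure M N = 0)"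

end

theory Submission
  imports Defs
begin


lemma rat_between: "(x::real) < y \<Longrightarrow> \<exists>q::rat. x < of_rat q \<and> of_rat q < y"
  using of_rat_dense by blast

lemma inv_facts:
  assumes inv: "\<mu> \<in> invariant_probs f" and cont: "continuous_on UNIV f"
  shows "prob_space \<mu>" "sets \<mu> = sets borel" "space \<mu> = UNIV"
    "f \<in> measurable \<mu> \<mu>" "distr \<mu> \<mu> f = \<mu>"
proof -
  show ps: "prob_space \<mu>" and s: "sets \<mu> = sets borel"
    using inv by (auto simp: invariant_probs_def borel_probs_def)
  interpret prob_space \<mu> by (rule ps)
  show sp: "space \<mu> = UNIV" using sets_eq_imp_space_eq[OF s] by simp
  have fb: "f \<in> borel_measurable borel" using cont by (rule borel_measurable_continuous_onI)
  show fm: "f \<in> measurable \<mu> \<mu>"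
    using fb by (simp add: measurable_cong_sets[OF s s])
  show "distr \<mu> \<mu> f = \<mu>"
  proof (rule measure_eqI)
    show "sets (distr \<mu> \<mu> f) = sets \<mu>" by simp
    fix A assume "A \<in> sets (distr \<mu> \<mu> f)"
    then have A: "A \<in> sets borel" using s by simp
    have pre: "f -` A \<in> sets \<mu>" using measurable_sets[OF fm, of A] A s sp by simp
    have "emeasure (distr \<mu> \<mu> f) A = emeasure \<mu> (f -` A \<inter> space \<mu>)"
      using A s by (simp add: emeasure_distr[OF fm])
    also have "\<dots> = emeasure \<mu> (f -` A)" using sp by simp
    also have "\<dots> = measure \<mu> (f -` A)"
      using emeasure_eq_measure by simp
    also have "\<dots> = measure \<mu> A" using inv A by (auto simp: invariant_probs_def)
    also have "\<dots> = emeasure \<mu> A" using emeasure_eq_measure by simp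
    finally show "emeasure (distr \<mu> \<mu> f) A = emeasure \<mu> A" .
  qed
qed

lemma integral_comp_f:
  fixes h :: "'a::metric_space \<Rightarrow> real"
  assumes inv: "\<mu> \<in> invariant_probs f" and cont: "continuous_on UNIV f"
    and h: "h \<in> borel_measurable borel"
  shows "(\<integral>x. h (f x) \<partial>\<mu>) = (\<integral>x. h x \<partial>\<mu>)"
proof -
  note I = inv_facts[OF inv cont]
  have hm: "h \<in> borel_measurable \<mu>" using h by (simp add: measurable_cong_sets[OF I(2)])
  have "(\<integral>x. h (f x) \<partial>\<mu>) = integral\<^sup>L (distr \<mu> \<mu> f) h"
    using integral_distr[OF I(4) hm] by simp
  also have "\<dots> = integral\<^sup>L \<mu> h" using I(5) by simp
  finally show ?thesis .
qed

definition Ssum :: "('a \<Rightarrow> 'a) \<Rightarrow> ('a \<Rightarrow> real) \<Rightarrow> nat \<Rightarrow> 'a \<Rightarrow> real" where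
  "Ssum f g n x = (\<Sum>j<n. g ((f ^^ j) x))"

primrec Mx :: "('a \<Rightarrow> 'a) \<Rightarrow> ('a \<Rightarrow> real) \<Rightarrow> nat \<Rightarrow> 'a \<Rightarrow> real" where
  "Mx f g 0 x = 0"
| "Mx f g (Suc N) x = max (Mx f g N x) (Ssum f g (Suc N) x)"

lemma Ssum_0[simp]: "Ssum f g 0 x = 0" by (simp add: Ssum_def)

lemma Ssum_Suc: "Ssum f g (Suc n) x = g x + Ssum f g n (f x)"
  unfolding Ssum_def by (simp only: sum.lessThan_Suc_shift) (simp add: funpow_Suc_right del: funpow.simps)

lemma Mx_ge: "n \<le> N \<Longrightarrow> Ssum f g n x \<le> Mx f g N x"
proof (induction N)
  case 0 then show ?case by simp
next
  case (Suc N) then show ?case by (cases "n = Suc N") auto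
qed

lemma Mx_nonneg: "0 \<le> Mx f g N x" using Mx_ge[of 0 N] by simp

lemma Mx_att: "\<exists>n\<le>N. Mx f g N x = Ssum f g n x"
proof (induction N)
  case 0 then show ?case by simp
next
  case (Suc N)
  then obtain n where "n \<le> N" "Mx f g N x = Ssum f g n x" by blast
  then show ?case by (cases "Mx f g N x \<le> Ssum f g (Suc N) x") (auto simp: max_def intro: le_SucI)
qed

lemma Mx_pos_iff: "Mx f g N x > 0 \<longleftrightarrow> (\<exists>n\<le>N. Ssum f g n x > 0)"
proof
  assume a: "Mx f g N x > 0"
  obtain n where n: "n \<le> N" "Mx f g N x = Ssum f g n x" using Mx_att[of N f g x] by blast
  show "\<exists>n\<le>N. Ssum f g n x > 0" using a n by (intro exI[of _ n]) simp
next
  assume "\<exists>n\<le>N. Ssum f g n x > 0"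
  then obtain n where "n \<le> N" "Ssum f g n x > 0" by blast
  then show "Mx f g N x > 0" using Mx_ge[of n N f g x] by linarith
qed

lemma Mx_key: "(if Mx f g N x > 0 then g x else 0) \<ge> Mx f g N x - Mx f g N (f x)"
proof (cases "Mx f g N x > 0")
  case True
  obtain n where n: "n \<le> N" "Mx f g N x = Ssum f g n x" using Mx_att[of N f g x] by blast
  have "n \<noteq> 0" using True n(2) by (cases "n = 0") simp_all
  then obtain m where m: "n = Suc m" by (cases n) auto
  have mN: "m \<le> N" using n(1) m by simp
  have le: "Ssum f g m (f x) \<le> Mx f g N (f x)" by (rule Mx_ge[OF mN])
  have "Mx f g N x = g x + Ssum f g m (f x)" using n(2) m by (simp only: Ssum_Suc)
  then have "Mx f g N x - Mx f g N (f x) \<le> g x" using le by linarith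
  then show ?thesis using True by (simp only: if_P)
next
  case False
  then have "Mx f g N x = 0" using Mx_nonneg[of f g N x] by linarith
  then show ?thesis using Mx_nonneg[of f g N "f x"] by simp
qed

lemma Ssum_bound: "(\<And>x. \<bar>g x\<bar> \<le> C) \<Longrightarrow> \<bar>Ssum f g n x\<bar> \<le> real n * C"
  unfolding Ssum_def
  by (rule order_trans[OF sum_abs]) (use sum_mono[of "{..<n}" "\<lambda>j. \<bar>g ((f^^j) x)\<bar>" "\<lambda>j. C"] in auto)

lemma Mx_bound: "(\<And>x. \<bar>g x\<bar> \<le> C) \<Longrightarrow> \<bar>Mx f g N x\<bar> \<le> real N * C"
proof -
  assume g: "\<And>x. \<bar>g x\<bar> \<le> C"
  obtain n where n: "n \<le> N" "Mx f g N x = Ssum f g n x" using Mx_att[of N f g x] by blast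
  have C: "0 \<le> C" using g[of x] by linarith
  have "\<bar>Ssum f g n x\<bar> \<le> real n * C" by (rule Ssum_bound[OF g])
  also have "\<dots> \<le> real N * C" using n C by (intro mult_right_mono) auto
  finally show ?thesis using n by simp
qed

lemma Ssum_meas[measurable]:
  assumes "f \<in> borel_measurable borel" "g \<in> borel_measurable borel"
  shows "Ssum f g n \<in> borel_measurable borel"
  unfolding Ssum_def using assms by measurable

lemma Mx_meas[measurable]:
  assumes "f \<in> borel_measurable borel" "g \<in> borel_measurable borel"
  shows "Mx f g N \<in> borel_measurable borel"
  by (induction N) (use assms in simp_all)

lemma maximal:
  fixes g :: "'a::metric_space \<Rightarrow> real"
  assumes inv: "\<mu> \<in> invariant_probs f" and cont: "continuous_on UNIV f"
    and gm: "g \<in> borel_measurable borel" and gb: "\<And>x. \<bar>g x\<bar> \<le> C"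
  shows "0 \<le> (\<integral>x. (if \<exists>n. Ssum f g n x > 0 then g x else 0) \<partial>\<mu>)"
proof -
  note I = inv_facts[OF inv cont]
  interpret prob_space \<mu> by (rule I(1))
  have fb[measurable]: "f \<in> borel_measurable borel" using cont by (rule borel_measurable_continuous_onI)
  note gm[measurable]
  have C: "0 \<le> C" using gb[of undefined] by linarith
  have mc: "\<And>h::'a\<Rightarrow>real. h \<in> borel_measurable borel \<Longrightarrow> h \<in> borel_measurable \<mu>"
    by (simp add: measurable_cong_sets[OF I(2)])
  have intb: "integrable \<mu> h" if "h \<in> borel_measurable borel" "\<And>x. \<bar>h x\<bar> \<le> B" for h :: "'a \<Rightarrow> real" and B
    using that by (intro integrable_const_bound[of h B]) (auto intro: mc)
  define s where "s N x = (if Mx f g N x > 0 then g x else 0)" for N x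
  define F where "F x = (if \<exists>n. Ssum f g n x > 0 then g x else 0)" for x
  have sm: "s N \<in> borel_measurable borel" for N unfolding s_def by measurable
  have Fm: "F \<in> borel_measurable borel" unfolding F_def by measurable
  have sb: "\<bar>s N x\<bar> \<le> C" for N x using gb[of x] C by (auto simp: s_def)
  have step: "0 \<le> integral\<^sup>L \<mu> (s N)" for N
  proof -
    have Mb: "\<bar>Mx f g N x\<bar> \<le> real N * C" for x by (rule Mx_bound[OF gb])
    have i1: "integrable \<mu> (Mx f g N)" by (rule intb[OF Mx_meas[OF fb gm] Mb])
    have i2: "integrable \<mu> (\<lambda>x. Mx f g N (f x))"
    proof (rule intb[of "\<lambda>x. Mx f g N (f x)" "real N * C"])
      show "(\<lambda>x. Mx f g N (f x)) \<in> borel_measurable borel" using Mx_meas[OF fb gm] fb by measurable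
      show "\<bar>Mx f g N (f x)\<bar> \<le> real N * C" for x by (rule Mb)
    qed
    have eq: "integral\<^sup>L \<mu> (\<lambda>x. Mx f g N x - Mx f g N (f x)) = 0"
      using integral_comp_f[OF inv cont Mx_meas[OF fb gm, of N]] i1 i2 by simp
    have "integral\<^sup>L \<mu> (\<lambda>x. Mx f g N x - Mx f g N (f x)) \<le> integral\<^sup>L \<mu> (s N)"
    proof (rule integral_mono)
      show "integrable \<mu> (\<lambda>x. Mx f g N x - Mx f g N (f x))" using i1 i2 by simp
      show "integrable \<mu> (s N)" by (rule intb[OF sm sb])
      show "Mx f g N x - Mx f g N (f x) \<le> s N x" for x using Mx_key[of f g N x] by (simp add: s_def)
    qed
    then show ?thesis using eq by simp
  qed
  have lim: "(\<lambda>N. integral\<^sup>L \<mu> (s N)) \<longlonglongrightarrow> integral\<^sup>L \<mu> F"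
  proof (rule integral_dominated_convergence[where w="\<lambda>x. C"])
    show "F \<in> borel_measurable \<mu>" by (rule mc[OF Fm])
    show "s N \<in> borel_measurable \<mu>" for N by (rule mc[OF sm])
    show "integrable \<mu> (\<lambda>x. C)" by simp
    show "AE x in \<mu>. norm (s N x) \<le> C" for N using sb by simp
    show "AE x in \<mu>. (\<lambda>N. s N x) \<longlonglongrightarrow> F x"
    proof (rule AE_I2)
      fix x
      show "(\<lambda>N. s N x) \<longlonglongrightarrow> F x"
      proof (cases "\<exists>n. Ssum f g n x > 0")
        case True
        then obtain n where n: "Ssum f g n x > 0" by blast
        have "eventually (\<lambda>N. s N x = F x) sequentially"
          unfolding eventually_sequentially
          by (rule exI[of _ n]) (use n True Mx_pos_iff[of f g _ x] in \<open>auto simp: s_def F_def\<close>)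
        then show ?thesis by (rule tendsto_eventually)
      next
        case False
        then have "s N x = F x" for N using Mx_pos_iff[of f g N x] by (auto simp: s_def F_def)
        then show ?thesis by simp
      qed
    qed
  qed
  show ?thesis using LIMSEQ_le_const[OF lim] step unfolding F_def by blast
qed

lemma emp_avg_Ssum: "emp_avg f x n g = Ssum f g n x / real n"
  by (simp add: emp_avg_def Ssum_def)

lemma emp_avg_neg: "emp_avg f x n (\<lambda>y. - g y) = - emp_avg f x n g"
  by (simp add: emp_avg_def sum_negf)

lemma emp_avg_bound: "(\<And>x. \<bar>g x\<bar> \<le> C) \<Longrightarrow> \<bar>emp_avg f x n g\<bar> \<le> C"
proof -
  assume g: "\<And>x. \<bar>g x\<bar> \<le> C"
  have C: "0 \<le> C" using g[of x] by linarith
  show ?thesis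
  proof (cases "n = 0")
    case True then show ?thesis using C by (simp add: emp_avg_def)
  next
    case False
    then have np: "real n > 0" by simp
    have b0: "\<bar>Ssum f g n x\<bar> \<le> real n * C" by (rule Ssum_bound[OF g])
    then have b: "\<bar>Ssum f g n x\<bar> \<le> C * real n" by (simp only: mult.commute)
    have "\<bar>emp_avg f x n g\<bar> = \<bar>Ssum f g n x\<bar> / real n" by (simp add: emp_avg_Ssum abs_divide)
    also have "\<dots> \<le> C" using b by (simp only: pos_divide_le_eq[OF np])
    finally show ?thesis .
  qed
qed

lemma emp_avg_meas[measurable]:
  assumes "f \<in> borel_measurable borel" "g \<in> borel_measurable borel"
  shows "(\<lambda>x. emp_avg f x n g) \<in> borel_measurable borel"
  unfolding emp_avg_Ssum using assms by measurable

lemma emp_diff: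
  assumes g: "\<And>x. \<bar>g x\<bar> \<le> C"
  shows "(\<lambda>n. emp_avg f x (Suc n) g - emp_avg f (f x) n g) \<longlonglongrightarrow> 0"
proof (rule Lim_null_comparison)
  have C: "0 \<le> C" using g[of x] by linarith
  show "(\<lambda>n. 2 * C / real (Suc n)) \<longlonglongrightarrow> 0"
    using LIMSEQ_Suc[OF lim_const_over_n[of "2*C"]] by simp
  show "\<forall>\<^sub>F n in sequentially. norm (emp_avg f x (Suc n) g - emp_avg f (f x) n g) \<le> 2 * C / real (Suc n)"
  proof (rule always_eventually, rule allI)
    fix n
    have e: "emp_avg f x (Suc n) g - emp_avg f (f x) n g = (g x - emp_avg f (f x) n g) / real (Suc n)"
    proof (cases "n = 0")
      case True then show ?thesis by (simp add: emp_avg_def)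
    next
      case False
      then show ?thesis
        by (simp add: emp_avg_Ssum Ssum_Suc field_simps)
    qed
    have "\<bar>emp_avg f (f x) n g\<bar> \<le> C" by (rule emp_avg_bound[OF g])
    then have "\<bar>g x - emp_avg f (f x) n g\<bar> \<le> 2 * C"
      using g[of x] by linarith
    then show "norm (emp_avg f x (Suc n) g - emp_avg f (f x) n g) \<le> 2 * C / real (Suc n)"
      unfolding e by (simp add: abs_divide divide_right_mono)
  qed
qed

lemma freq_transfer:
  fixes a b :: "nat \<Rightarrow> real" and t :: real and q :: rat
  assumes lim: "(\<lambda>n. a n - b n) \<longlonglongrightarrow> 0"
    and q: "t < of_rat q" "\<forall>N. \<exists>n\<ge>N. of_rat q < a n"
  shows "\<exists>q::rat. t < of_rat q \<and> (\<forall>N. \<exists>n\<ge>N. of_rat q < b n)"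
proof -
  obtain q' :: rat where q': "t < of_rat q'" "of_rat q' < (of_rat q :: real)"
    using rat_between[OF q(1)] by blast
  obtain N0 where N0: "\<And>n. n \<ge> N0 \<Longrightarrow> \<bar>a n - b n\<bar> < of_rat q - of_rat q'"
    using lim q'(2) unfolding LIMSEQ_iff by (metis diff_gt_0_iff_gt real_norm_def diff_zero)
  have "\<forall>N. \<exists>n\<ge>N. of_rat q' < b n"
  proof
    fix N
    obtain n where n: "n \<ge> max N N0" "of_rat q < a n" using q(2) by blast
    then show "\<exists>n\<ge>N. of_rat q' < b n" using N0[of n] by (intro exI[of _ n]) auto
  qed
  then show ?thesis using q' by blast
qed

lemma freq_shift: "(\<forall>N. \<exists>n\<ge>N. P (Suc n)) \<longleftrightarrow> (\<forall>N. \<exists>n\<ge>N. P n)"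
proof
  assume "\<forall>N. \<exists>n\<ge>N. P (Suc n)"
  then show "\<forall>N. \<exists>n\<ge>N. P n" by (metis le_SucI)
next
  assume h: "\<forall>N. \<exists>n\<ge>N. P n"
  show "\<forall>N. \<exists>n\<ge>N. P (Suc n)"
  proof
    fix N obtain n where "n \<ge> Suc N" "P n" using h by blast
    then show "\<exists>n\<ge>N. P (Suc n)" by (intro exI[of _ "n - 1"]) auto
  qed
qed

definition Bset :: "('a \<Rightarrow> 'a) \<Rightarrow> ('a \<Rightarrow> real) \<Rightarrow> real \<Rightarrow> 'a set" where
  "Bset f g t = {x. \<exists>q::rat. t < of_rat q \<and> (\<forall>N. \<exists>n\<ge>N. of_rat q < emp_avg f x n g)}"

lemma Bset_inv:
  assumes g: "\<And>x. \<bar>g x\<bar> \<le> C"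
  shows "f -` Bset f g t = Bset f g t"
proof -
  have "x \<in> Bset f g t \<longleftrightarrow> f x \<in> Bset f g t" for x
  proof -
    have L: "(\<lambda>n. emp_avg f x (Suc n) g - emp_avg f (f x) n g) \<longlonglongrightarrow> 0" by (rule emp_diff[OF g])
    have L2: "(\<lambda>n. emp_avg f (f x) n g - emp_avg f x (Suc n) g) \<longlonglongrightarrow> 0"
      using tendsto_minus[OF L] by simp
    have "x \<in> Bset f g t \<longleftrightarrow> (\<exists>q::rat. t < of_rat q \<and> (\<forall>N. \<exists>n\<ge>N. of_rat q < emp_avg f x (Suc n) g))"
      unfolding Bset_def by (simp add: freq_shift[where P="\<lambda>n. _ < emp_avg f x n g"])
    also have "\<dots> \<longleftrightarrow> f x \<in> Bset f g t"
      unfolding Bset_def using freq_transfer[OF L, of t] freq_transfer[OF L2, of t] by blast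
    finally show ?thesis .
  qed
  then show ?thesis by auto
qed

lemma Bset_sub:
  "Bset f g t \<subseteq> {x. \<exists>n. Ssum f (\<lambda>y. g y - t) n x > 0}"
proof
  fix x assume "x \<in> Bset f g t"
  then obtain q :: rat where q: "t < of_rat q" "\<forall>N. \<exists>n\<ge>N. of_rat q < emp_avg f x n g"
    unfolding Bset_def by blast
  then obtain n where n: "n \<ge> 1" "of_rat q < emp_avg f x n g" by blast
  have "Ssum f (\<lambda>y. g y - t) n x = real n * (emp_avg f x n g - t)"
    using n(1) by (simp add: Ssum_def emp_avg_def sum_subtractf field_simps)
  also have "\<dots> > 0" using n q by (intro mult_pos_pos) auto
  finally show "x \<in> {x. \<exists>n. Ssum f (\<lambda>y. g y - t) n x > 0}" by blast
qed

lemma Bset_meas: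
  assumes [measurable]: "f \<in> borel_measurable borel" "g \<in> borel_measurable borel"
  shows "Bset f g t \<in> sets borel"
proof -
  have "Bset f g t = {x \<in> space borel. \<exists>q::rat. t < of_rat q \<and> (\<forall>N::nat. \<exists>n::nat. N \<le> n \<and> of_rat q < emp_avg f x n g)}"
    by (auto simp: Bset_def)
  also have "\<dots> \<in> sets borel" by measurable
  finally show ?thesis .
qed

lemma birk_null:
  fixes g :: "'a::metric_space \<Rightarrow> real"
  assumes erg: "\<mu> \<in> ergodic_probs f" and cont: "continuous_on UNIV f"
    and gm: "g \<in> borel_measurable borel" and gb: "\<And>x. \<bar>g x\<bar> \<le> C"
    and t: "t > integral\<^sup>L \<mu> g"
  shows "Bset f g t \<in> null_sets \<mu>"
proof -
  have inv: "\<mu> \<in> invariant_probs f" using erg by (simp add: ergodic_probs_def)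
  note I = inv_facts[OF inv cont]
  interpret prob_space \<mu> by (rule I(1))
  have fb: "f \<in> borel_measurable borel" using cont by (rule borel_measurable_continuous_onI)
  have Bs: "Bset f g t \<in> sets borel" by (rule Bset_meas[OF fb gm])
  have "measure \<mu> (Bset f g t) = 0 \<or> measure \<mu> (Bset f g t) = 1"
  proof -
    have e: "f -` Bset f g t = Bset f g t" by (rule Bset_inv[OF gb])
    have "\<forall>A\<in>sets borel. f -` A = A \<longrightarrow> measure \<mu> A = 0 \<or> measure \<mu> A = 1"
      using erg unfolding ergodic_probs_def by blast
    then show ?thesis using Bs e by blast
  qed
  moreover have "measure \<mu> (Bset f g t) \<noteq> 1"
  proof
    assume m1: "measure \<mu> (Bset f g t) = 1"
    have "AE x in \<mu>. x \<in> Bset f g t" by (rule AE_prob_1[OF m1])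
    then have ae: "AE x in \<mu>. (\<exists>n. Ssum f (\<lambda>y. g y - t) n x > 0)"
      by eventually_elim (use Bset_sub[of f g t] in blast)
    have gb': "\<bar>g x - t\<bar> \<le> C + \<bar>t\<bar>" for x using gb[of x] by linarith
    have gm': "(\<lambda>y. g y - t) \<in> borel_measurable borel" using gm by measurable
    have "0 \<le> (\<integral>x. (if \<exists>n. Ssum f (\<lambda>y. g y - t) n x > 0 then g x - t else 0) \<partial>\<mu>)"
      by (rule maximal[OF inv cont gm' gb'])
    also have "\<dots> = (\<integral>x. g x - t \<partial>\<mu>)"
    proof (rule integral_cong_AE)
      have "(\<lambda>x. if \<exists>n. 0 < Ssum f (\<lambda>y. g y - t) n x then g x - t else 0) \<in> borel_measurable borel"
        using fb gm by measurable
      then show "(\<lambda>x. if \<exists>n. 0 < Ssum f (\<lambda>y. g y - t) n x then g x - t else 0) \<in> borel_measurable \<mu>"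
        by (simp add: measurable_cong_sets[OF I(2)])
      show "(\<lambda>x. g x - t) \<in> borel_measurable \<mu>" using gm' by (simp add: measurable_cong_sets[OF I(2)])
      show "AE x in \<mu>. (if \<exists>n. 0 < Ssum f (\<lambda>y. g y - t) n x then g x - t else 0) = g x - t"
        using ae by eventually_elim simp
    qed
    also have "\<dots> = integral\<^sup>L \<mu> g - t"
    proof -
      have "integrable \<mu> g"
        by (intro integrable_const_bound[of g C]) (use gb gm in \<open>auto simp: measurable_cong_sets[OF I(2)]\<close>)
      then show ?thesis by (simp add: prob_space)
    qed
    finally show False using t by simp
  qed
  ultimately have "measure \<mu> (Bset f g t) = 0" by simp
  then show ?thesis using Bs I(2) by (simp add: emeasure_eq_measure null_sets_def)
qed

lemma birk_upper:
  fixes g :: "'a::metric_space \<Rightarrow> real"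
  assumes erg: "\<mu> \<in> ergodic_probs f" and cont: "continuous_on UNIV f"
    and gm: "g \<in> borel_measurable borel" and gb: "\<And>x. \<bar>g x\<bar> \<le> C"
  shows "AE x in \<mu>. \<forall>a. a > integral\<^sup>L \<mu> g \<longrightarrow> eventually (\<lambda>n. emp_avg f x n g < a) sequentially"
proof -
  have "AE x in \<mu>. \<forall>q::rat. of_rat q > integral\<^sup>L \<mu> g \<longrightarrow> x \<notin> Bset f g (of_rat q)"
    unfolding AE_all_countable
  proof
    fix q :: rat
    show "AE x in \<mu>. of_rat q > integral\<^sup>L \<mu> g \<longrightarrow> x \<notin> Bset f g (of_rat q)"
    proof (cases "of_rat q > integral\<^sup>L \<mu> g")
      case True
      then show ?thesis using AE_not_in[OF birk_null[OF erg cont gm gb True]] by simp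
    qed simp
  qed
  then show ?thesis
  proof eventually_elim
    case (elim x)
    show ?case
    proof (intro allI impI)
      fix a assume a: "a > integral\<^sup>L \<mu> g"
      obtain q :: rat where q: "integral\<^sup>L \<mu> g < of_rat q" "of_rat q < a" using rat_between[OF a] by blast
      obtain r :: rat where r: "of_rat q < (of_rat r::real)" "of_rat r < a" using rat_between[OF q(2)] by blast
      have "x \<notin> Bset f g (of_rat q)" using elim q by blast
      then have "\<not> (\<forall>N. \<exists>n\<ge>N. of_rat r < emp_avg f x n g)" using r unfolding Bset_def by blast
      then obtain N where "\<forall>n\<ge>N. emp_avg f x n g \<le> of_rat r" by (auto simp: not_less)
      then show "eventually (\<lambda>n. emp_avg f x n g < a) sequentially"
        unfolding eventually_sequentially using r by (meson le_less_trans)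
    qed
  qed
qed

lemma birkhoff:
  fixes g :: "'a::metric_space \<Rightarrow> real"
  assumes erg: "\<mu> \<in> ergodic_probs f" and cont: "continuous_on UNIV f"
    and gm: "g \<in> borel_measurable borel" and gb: "\<And>x. \<bar>g x\<bar> \<le> C"
  shows "AE x in \<mu>. (\<lambda>n. emp_avg f x n g) \<longlonglongrightarrow> integral\<^sup>L \<mu> g"
proof -
  have gm': "(\<lambda>x. - g x) \<in> borel_measurable borel" using gm by measurable
  have gb': "\<bar>- g x\<bar> \<le> C" for x using gb[of x] by simp
  have ineg: "integral\<^sup>L \<mu> (\<lambda>x. - g x) = - integral\<^sup>L \<mu> g" by simp
  show ?thesis using birk_upper[OF erg cont gm gb] birk_upper[OF erg cont gm' gb']
  proof eventually_elim
    case (elim x)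
    show ?case
    proof (rule order_tendstoI)
      fix a assume "a > integral\<^sup>L \<mu> g"
      then show "eventually (\<lambda>n. emp_avg f x n g < a) sequentially" using elim by blast
    next
      fix a assume "a < integral\<^sup>L \<mu> g"
      then have "- a > integral\<^sup>L \<mu> (\<lambda>x. - g x)" by (simp add: ineg)
      then have "eventually (\<lambda>n. emp_avg f x n (\<lambda>x. - g x) < - a) sequentially" using elim by blast
      then show "eventually (\<lambda>n. a < emp_avg f x n g) sequentially" by (simp add: emp_avg_neg)
    qed
  qed
qed



definition dseq :: "nat \<Rightarrow> 'a::metric_space" where
  "dseq = from_nat_into (SOME D::'a set. countable D \<and> closure D = UNIV)"

lemma dseq_dense:
  assumes sep: "separable_space (euclidean :: 'a::metric_space topology)" and e: "e > 0"
  shows "\<exists>i. dist (dseq i) (x::'a) < e"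
proof -
  obtain C :: "'a set" where C: "countable C" "closure C = UNIV"
    using sep unfolding separable_space_def by auto
  define D :: "'a set" where "D = (SOME D::'a set. countable D \<and> closure D = UNIV)"
  have D: "countable D \<and> closure D = UNIV" unfolding D_def by (rule someI[of _ C]) (use C in auto)
  have ne: "D \<noteq> {}" using D by auto
  have rng: "range (dseq :: nat \<Rightarrow> 'a) = D" unfolding dseq_def D_def[symmetric]
    using range_from_nat_into[OF ne] D by blast
  have "x \<in> closure D" using D by simp
  then obtain y where y: "y \<in> D" "dist y x < e" using e unfolding closure_approachable by blast
  then obtain i where "y = dseq i" using rng by (metis rangeE)
  then show ?thesis using y by blast
qed

type_synonym atomidx = "rat \<times> rat \<times> nat \<times> rat \<times> nat"

definition phi :: "atomidx \<Rightarrow> 'a::metric_space \<Rightarrow> real" where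
  "phi p x = (case p of (a,c,i,r,m) \<Rightarrow> min 1 (real m * max 0 (of_rat r - dist x (dseq i))))"

definition atom :: "atomidx \<Rightarrow> 'a::metric_space \<Rightarrow> real" where
  "atom p x = (case p of (a,c,i,r,m) \<Rightarrow> of_rat a + (of_rat c - of_rat a) * phi p x)"

definition lipc :: "atomidx \<Rightarrow> real" where
  "lipc p = (case p of (a,c,i,r,m) \<Rightarrow> \<bar>of_rat c - of_rat a\<bar> * real m)"

definition bdc :: "atomidx \<Rightarrow> real" where
  "bdc p = (case p of (a,c,i,r,m) \<Rightarrow> \<bar>of_rat a\<bar> + \<bar>of_rat c\<bar>)"

lemma phi_range: "0 \<le> phi p x" "phi p x \<le> 1"
  by (cases p; auto simp: phi_def)+

lemma phi_lip: "\<bar>phi p x - phi p y\<bar> \<le> real (snd (snd (snd (snd p)))) * dist x y"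
proof -
  obtain a c i r m where p: "p = (a,c,i,r,m)" by (cases p) auto
  define u where "u = of_rat r - dist x (dseq i)"
  define v where "v = of_rat r - dist y (dseq i)"
  have uv: "\<bar>u - v\<bar> \<le> dist x y" unfolding u_def v_def
    using dist_triangle[of x "dseq i" y] dist_triangle[of y "dseq i" x] by (simp add: dist_commute abs_le_iff)
  have m1: "\<bar>max 0 u - max 0 v\<bar> \<le> \<bar>u - v\<bar>" by (auto simp: max_def)
  have m2: "\<bar>min 1 (real m * max 0 u) - min 1 (real m * max 0 v)\<bar> \<le> \<bar>real m * max 0 u - real m * max 0 v\<bar>"
    by (auto simp: min_def)
  have "\<bar>real m * max 0 u - real m * max 0 v\<bar> = real m * \<bar>max 0 u - max 0 v\<bar>"
    by (simp add: right_diff_distrib[symmetric] abs_mult)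
  also have "\<dots> \<le> real m * dist x y" using m1 uv by (intro mult_left_mono) auto
  finally show ?thesis using m2 by (simp add: p phi_def u_def v_def)
qed

lemma atom_lip: "\<bar>atom p x - atom p y\<bar> \<le> lipc p * dist x y"
proof -
  obtain a c i r m where p: "p = (a,c,i,r,m)" by (cases p) auto
  have "atom p x - atom p y = (of_rat c - of_rat a) * (phi p x - phi p y)"
    by (simp add: p atom_def algebra_simps)
  then have "\<bar>atom p x - atom p y\<bar> = \<bar>of_rat c - of_rat a\<bar> * \<bar>phi p x - phi p y\<bar>"
    by (simp add: abs_mult)
  also have "\<dots> \<le> \<bar>of_rat c - of_rat a\<bar> * (real m * dist x y)"
    using phi_lip[of p x y] by (intro mult_left_mono) (auto simp: p)
  finally show ?thesis by (simp add: p lipc_def)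
qed

lemma atom_bd: "\<bar>atom p x\<bar> \<le> bdc p"
proof -
  obtain a c i r m where p: "p = (a,c,i,r,m)" by (cases p) auto
  have e: "atom p x = of_rat a * (1 - phi p x) + of_rat c * phi p x"
    by (simp add: p atom_def algebra_simps)
  have "\<bar>of_rat a * (1 - phi p x)\<bar> \<le> \<bar>of_rat a\<bar>"
    using phi_range[of p x] by (simp add: abs_mult mult_left_le)
  moreover have "\<bar>of_rat c * phi p x\<bar> \<le> \<bar>of_rat c\<bar>"
    using phi_range[of p x] by (simp add: abs_mult mult_left_le)
  ultimately show ?thesis unfolding e by (simp add: p bdc_def)
qed

lemma Max_close:
  fixes F G :: "'b \<Rightarrow> real"
  assumes "finite P" "P \<noteq> {}" "\<And>p. p \<in> P \<Longrightarrow> \<bar>F p - G p\<bar> \<le> e"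
  shows "\<bar>Max (F ` P) - Max (G ` P)\<bar> \<le> e"
proof -
  have A: "Max (F ` P) \<le> Max (G ` P) + e" if "\<And>p. p \<in> P \<Longrightarrow> \<bar>F p - G p\<bar> \<le> e" for F G :: "'b \<Rightarrow> real"
  proof -
    have "Max (F ` P) \<in> F ` P" using assms(1,2) by (intro Max_in) auto
    then obtain p where p: "p \<in> P" "Max (F ` P) = F p" by blast
    have "G p \<le> Max (G ` P)" using assms(1) p(1) by (intro Max_ge) auto
    then show ?thesis using that[OF p(1)] p(2) by linarith
  qed
  have "Max (F ` P) \<le> Max (G ` P) + e" by (rule A) (use assms(3) in blast)
  moreover have "Max (G ` P) \<le> Max (F ` P) + e" by (rule A) (use assms(3) in \<open>force simp: abs_minus_commute\<close>)
  ultimately show ?thesis by linarith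
qed

definition hh :: "atomidx list \<Rightarrow> 'a::metric_space \<Rightarrow> real" where
  "hh L x = (if L = [] then 0 else Max ((\<lambda>p. atom p x) ` set L))"

definition hs :: "nat \<Rightarrow> 'a::metric_space \<Rightarrow> real" where
  "hs k = hh (from_nat k)"

lemma hh_lip: "\<bar>hh L x - hh L y\<bar> \<le> (\<Sum>p\<in>set L. lipc p) * dist x y"
proof (cases "L = []")
  case True then show ?thesis by (simp add: hh_def)
next
  case False
  have nn: "0 \<le> lipc p" for p by (cases p) (auto simp: lipc_def)
  have "\<bar>atom p x - atom p y\<bar> \<le> (\<Sum>p\<in>set L. lipc p) * dist x y" if "p \<in> set L" for p
  proof -
    have "lipc p \<le> (\<Sum>p\<in>set L. lipc p)" using that nn by (intro member_le_sum) auto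
    then have "lipc p * dist x y \<le> (\<Sum>p\<in>set L. lipc p) * dist x y" by (intro mult_right_mono) auto
    then show ?thesis using atom_lip[of p x y] by linarith
  qed
  then have "\<bar>Max ((\<lambda>p. atom p x) ` set L) - Max ((\<lambda>p. atom p y) ` set L)\<bar> \<le> (\<Sum>p\<in>set L. lipc p) * dist x y"
    using False by (intro Max_close[where F="\<lambda>p. atom p x" and G="\<lambda>p. atom p y"]) auto
  then show ?thesis using False unfolding hh_def by simp
qed

lemma hh_bd: "\<bar>hh L x\<bar> \<le> (\<Sum>p\<in>set L. bdc p)"
proof (cases "L = []")
  case True then show ?thesis by (simp add: hh_def)
next
  case False
  have nn: "0 \<le> bdc p" for p by (cases p) (auto simp: bdc_def)
  have "\<bar>atom p x - 0\<bar> \<le> (\<Sum>p\<in>set L. bdc p)" if "p \<in> set L" for p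
  proof -
    have "bdc p \<le> (\<Sum>p\<in>set L. bdc p)" using that nn by (intro member_le_sum) auto
    then show ?thesis using atom_bd[of p x] by linarith
  qed
  then have "\<bar>Max ((\<lambda>p. atom p x) ` set L) - Max ((\<lambda>p. 0) ` set L)\<bar> \<le> (\<Sum>p\<in>set L. bdc p)"
    using False by (intro Max_close[where F="\<lambda>p. atom p x" and G="\<lambda>p. 0"]) auto
  moreover have "Max ((\<lambda>p. 0::real) ` set L) = 0" using False by simp
  ultimately show ?thesis using False by (simp add: hh_def)
qed

lemma hh_bcont: "hh L \<in> bcontinuous"
proof -
  have nn: "0 \<le> (\<Sum>p\<in>set L. lipc p)" by (intro sum_nonneg) (auto simp: lipc_def split: prod.splits)
  have "(\<Sum>p\<in>set L. lipc p)-lipschitz_on UNIV (hh L)"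
    by (rule lipschitz_onI) (use hh_lip nn in \<open>auto simp: dist_real_def\<close>)
  then have "continuous_on UNIV (hh L)" by (rule lipschitz_on_continuous_on)
  moreover have "bounded (range (hh L))"
    unfolding bounded_iff using hh_bd[of L] by auto
  ultimately show ?thesis by (simp add: bcontinuous_def)
qed

lemma hs_bcont: "hs k \<in> bcontinuous" by (simp add: hs_def hh_bcont)

lemma hs_lip: "\<exists>Lc. \<forall>x y. \<bar>hs k x - hs k y\<bar> \<le> Lc * dist x y"
  unfolding hs_def using hh_lip by blast



lemma bcont_bound: "g \<in> bcontinuous \<Longrightarrow> \<exists>C. \<forall>x. \<bar>g x\<bar> \<le> C"
  unfolding bcontinuous_def bounded_iff by auto

lemma bcont_meas: "g \<in> bcontinuous \<Longrightarrow> g \<in> borel_measurable borel"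
  unfolding bcontinuous_def by (auto intro: borel_measurable_continuous_onI)

lemma bcont_int:
  assumes mu: "\<mu> \<in> borel_probs" and g: "g \<in> bcontinuous"
  shows "integrable \<mu> g"
proof -
  have ps: "prob_space \<mu>" and s: "sets \<mu> = sets borel" using mu by (auto simp: borel_probs_def)
  interpret prob_space \<mu> by (rule ps)
  obtain C where C: "\<forall>x. \<bar>g x\<bar> \<le> C" using bcont_bound[OF g] by blast
  show ?thesis
    by (intro integrable_const_bound[of g C]) (use C bcont_meas[OF g] in \<open>auto simp: measurable_cong_sets[OF s]\<close>)
qed

lemma bcont_neg: "g \<in> bcontinuous \<Longrightarrow> (\<lambda>x. - g x) \<in> bcontinuous"
  unfolding bcontinuous_def bounded_iff by (auto intro: continuous_intros)

lemma approx_exists: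
  fixes g :: "'a::metric_space \<Rightarrow> real"
  assumes sep: "separable_space (euclidean :: 'a topology)" and g: "g \<in> bcontinuous"
    and C: "\<And>y. \<bar>g y\<bar> \<le> C" and a0: "of_rat a0 < - C" and a: "a < g x"
  shows "\<exists>p. fst p = a0 \<and> (\<forall>y. atom p y \<le> g y) \<and> atom p x > a"
proof -
  have a0x: "of_rat a0 < g x" using C[of x] a0 by linarith
  obtain c :: rat where c: "max a (of_rat a0) < of_rat c" "of_rat c < g x"
    using rat_between[of "max a (of_rat a0)" "g x"] a a0x by auto
  have "continuous_on UNIV g" using g by (simp add: bcontinuous_def)
  then obtain \<delta> where d: "\<delta> > 0" "\<And>y. dist y x < \<delta> \<Longrightarrow> dist (g y) (g x) < g x - of_rat c"
    unfolding continuous_on_iff using c(2) by (metis UNIV_I diff_gt_0_iff_gt)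
  obtain r :: rat where r: "0 < (of_rat r::real)" "of_rat r < \<delta> / 2" using rat_between[of 0 "\<delta>/2"] d(1) by auto
  obtain i where i: "dist (dseq i) x < of_rat r / 2" using dseq_dense[OF sep, of "of_rat r / 2" x] r(1) by auto
  obtain m :: nat where m: "2 / of_rat r < real m" using reals_Archimedean2 by blast
  define p where "p = (a0, c, i, r, m)"
  have cpos: "of_rat a0 < (of_rat c :: real)" using c(1) by linarith
  have phix: "phi p x = 1"
  proof -
    have "of_rat r - dist x (dseq i) > of_rat r / 2" using i by (simp add: dist_commute)
    then have "max 0 (of_rat r - dist x (dseq i)) \<ge> of_rat r / 2" by linarith
    then have "real m * max 0 (of_rat r - dist x (dseq i)) \<ge> real m * (of_rat r / 2)"
      by (intro mult_left_mono) auto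
    moreover have "real m * (of_rat r / 2) \<ge> 1"
      using m r(1) by (simp add: field_simps)
    ultimately show ?thesis by (simp add: phi_def p_def)
  qed
  have "atom p x = of_rat c" by (simp add: atom_def p_def phix[unfolded p_def])
  moreover have "atom p y \<le> g y" for y
  proof (cases "dist y (dseq i) < of_rat r")
    case True
    have "dist y x \<le> dist y (dseq i) + dist (dseq i) x" by (rule dist_triangle)
    then have "dist y x < \<delta>" using True i r by linarith
    then have gy: "g y > of_rat c" using d(2)[of y] by (simp add: dist_real_def abs_less_iff)
    have "atom p y = of_rat a0 + (of_rat c - of_rat a0) * phi p y" by (simp add: atom_def p_def)
    also have "\<dots> \<le> of_rat a0 + (of_rat c - of_rat a0) * 1"
      using phi_range[of p y] cpos by (intro add_left_mono mult_left_mono) auto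
    finally show ?thesis using gy by simp
  next
    case False
    then have "phi p y = 0" by (simp add: phi_def p_def)
    then show ?thesis using C[of y] a0 by (simp add: atom_def p_def)
  qed
  ultimately show ?thesis using c(1) by (intro exI[of _ p]) (auto simp: p_def)
qed

lemma approx_int:
  fixes g :: "'a::metric_space \<Rightarrow> real"
  assumes sep: "separable_space (euclidean :: 'a topology)" and mu: "\<mu> \<in> borel_probs"
    and g: "g \<in> bcontinuous" and e: "e > 0"
  shows "\<exists>k. (\<forall>x. hs k x \<le> g x) \<and> integral\<^sup>L \<mu> (hs k) > integral\<^sup>L \<mu> g - e"
proof -
  have ps: "prob_space \<mu>" and s: "sets \<mu> = sets borel" using mu by (auto simp: borel_probs_def)
  interpret prob_space \<mu> by (rule ps)
  obtain C where C: "\<And>x. \<bar>g x\<bar> \<le> C" using bcont_bound[OF g] by blast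
  obtain a0 :: rat where a0: "- C - 1 < of_rat a0" "of_rat a0 < - C" using rat_between[of "-C-1" "-C"] by auto
  define valid where "valid p \<longleftrightarrow> fst p = a0 \<and> (\<forall>y::'a. atom p y \<le> g y)" for p :: atomidx
  define p0 :: atomidx where "p0 = (a0, a0, 0, 0, 0)"
  have atom_p0: "atom p0 y = of_rat a0" for y :: 'a by (simp add: atom_def p0_def)
  have vp0: "valid p0" unfolding valid_def using atom_p0 C a0 by (auto simp: p0_def) (smt (verit))
  define LK where "LK K = p0 # filter valid (map from_nat [0..<K])" for K
  define psi :: "nat \<Rightarrow> 'a \<Rightarrow> real" where "psi K = hh (LK K)" for K
  have valid_LK: "valid p" if "p \<in> set (LK K)" for p K using that vp0 by (auto simp: LK_def)
  have psi_eq: "psi K y = Max ((\<lambda>p. atom p y) ` set (LK K))" for K y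
    by (simp add: psi_def hh_def LK_def)
  have psi_le: "psi K y \<le> g y" for K y
  proof -
    have fin: "finite ((\<lambda>p. atom p y) ` set (LK K))" by simp
    have ne: "(\<lambda>p. atom p y) ` set (LK K) \<noteq> {}" by (simp add: LK_def)
    have all: "\<forall>a\<in>(\<lambda>p. atom p y) ` set (LK K). a \<le> g y"
    proof
      fix a assume "a \<in> (\<lambda>p. atom p y) ` set (LK K)"
      then obtain p where p: "p \<in> set (LK K)" "a = atom p y" by blast
      have "valid p" by (rule valid_LK[OF p(1)])
      then show "a \<le> g y" using p(2) unfolding valid_def by blast
    qed
    show ?thesis unfolding psi_eq by (subst Max_le_iff[OF fin ne]) (rule all)
  qed
  have psi_ge_atom: "atom p y \<le> psi K y" if "p \<in> set (LK K)" for p K y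
    unfolding psi_eq using that by (intro Max_ge) simp_all
  have psi_ge: "of_rat a0 \<le> psi K y" for K y
    using psi_ge_atom[of p0 K y] atom_p0 by (simp add: LK_def)
  have psi_bd: "\<bar>psi K y\<bar> \<le> C + \<bar>of_rat a0\<bar>" for K y
    using psi_le[of K y] psi_ge[of K y] C[of y] by linarith
  have psi_meas: "psi K \<in> borel_measurable \<mu>" for K
    using bcont_meas[OF hh_bcont[of "LK K"]] by (simp add: psi_def measurable_cong_sets[OF s])
  have lim_pt: "(\<lambda>K. psi K x) \<longlonglongrightarrow> g x" for x
  proof (rule order_tendstoI)
    fix a assume ax: "a > g x"
    have "psi K x < a" for K using psi_le[of K x] ax by linarith
    then show "eventually (\<lambda>K. psi K x < a) sequentially" by simp
  next
    fix a assume a: "a < g x"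
    obtain p where p: "fst p = a0" "\<forall>y. atom p y \<le> g y" "atom p x > a"
      using approx_exists[OF sep g C a0(2) a] by blast
    have vp: "valid p" using p by (simp add: valid_def)
    have "p \<in> set (LK K)" if "K > to_nat p" for K
    proof -
      have "p \<in> from_nat ` {0..<K}" by (rule image_eqI[of _ _ "to_nat p"]) (use that in simp_all)
      then show ?thesis using vp by (simp add: LK_def)
    qed
    have "a < psi K x" if "K \<ge> Suc (to_nat p)" for K
    proof -
      have "p \<in> set (LK K)" using \<open>\<And>K. K > to_nat p \<Longrightarrow> p \<in> set (LK K)\<close>[of K] that by simp
      then show ?thesis using psi_ge_atom[of p K x] p(3) by linarith
    qed
    then show "eventually (\<lambda>K. a < psi K x) sequentially"
      unfolding eventually_sequentially by blast
  qed
  have "(\<lambda>K. integral\<^sup>L \<mu> (psi K)) \<longlonglongrightarrow> integral\<^sup>L \<mu> g"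
  proof (rule integral_dominated_convergence[where w="\<lambda>x. C + \<bar>of_rat a0\<bar>"])
    show "g \<in> borel_measurable \<mu>" using bcont_meas[OF g] by (simp add: measurable_cong_sets[OF s])
    show "psi K \<in> borel_measurable \<mu>" for K by (rule psi_meas)
    show "integrable \<mu> (\<lambda>x. C + \<bar>of_rat a0\<bar>)" by simp
    show "AE x in \<mu>. (\<lambda>K. psi K x) \<longlonglongrightarrow> g x" using lim_pt by simp
    show "AE x in \<mu>. norm (psi K x) \<le> C + \<bar>of_rat a0\<bar>" for K using psi_bd by simp
  qed
  then have "eventually (\<lambda>K. integral\<^sup>L \<mu> (psi K) > integral\<^sup>L \<mu> g - e) sequentially"
    using e by (intro order_tendstoD) auto
  then obtain K where K: "integral\<^sup>L \<mu> (psi K) > integral\<^sup>L \<mu> g - e"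
    unfolding eventually_sequentially by blast
  have "hs (to_nat (LK K)) = psi K" by (simp add: hs_def psi_def)
  then show ?thesis using K psi_le by (intro exI[of _ "to_nat (LK K)"]) simp
qed

lemma port:
  fixes g :: "'a::metric_space \<Rightarrow> real" and L :: "nat \<Rightarrow> ('a \<Rightarrow> real) \<Rightarrow> real"
  assumes sep: "separable_space (euclidean :: 'a topology)" and mu: "\<mu> \<in> borel_probs"
    and mono: "\<And>j g h. (\<And>x. g x \<le> h x) \<Longrightarrow> L j g \<le> L j h"
    and neg: "\<And>j g. L j (\<lambda>x. - g x) = - L j g"
    and conv: "\<And>k. (\<lambda>j. L j (hs k)) \<longlonglongrightarrow> integral\<^sup>L \<mu> (hs k)"
    and g: "g \<in> bcontinuous"
  shows "(\<lambda>j. L j g) \<longlonglongrightarrow> integral\<^sup>L \<mu> g"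
proof -
  have low: "eventually (\<lambda>j. a < L j g) sequentially" if g: "g \<in> bcontinuous" and a: "a < integral\<^sup>L \<mu> g" for g a
  proof -
    obtain k where k: "\<forall>x. hs k x \<le> g x" "integral\<^sup>L \<mu> (hs k) > integral\<^sup>L \<mu> g - (integral\<^sup>L \<mu> g - a)"
      using approx_int[OF sep mu g, of "integral\<^sup>L \<mu> g - a"] a by auto
    have "eventually (\<lambda>j. a < L j (hs k)) sequentially" using k(2) by (intro order_tendstoD(1)[OF conv]) simp
    then show ?thesis
    proof (rule eventually_mono)
      fix j assume "a < L j (hs k)"
      moreover have "L j (hs k) \<le> L j g" by (rule mono) (use k(1) in blast)
      ultimately show "a < L j g" by linarith
    qed
  qed
  show ?thesis
  proof (rule order_tendstoI)
    fix a assume "a < integral\<^sup>L \<mu> g"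
    then show "eventually (\<lambda>j. a < L j g) sequentially" by (rule low[OF g])
  next
    fix a assume a: "a > integral\<^sup>L \<mu> g"
    have "- a < integral\<^sup>L \<mu> (\<lambda>x. - g x)" using a by simp
    then have "eventually (\<lambda>j. - a < L j (\<lambda>x. - g x)) sequentially" by (rule low[OF bcont_neg[OF g]])
    then show "eventually (\<lambda>j. L j g < a) sequentially" by (simp add: neg)
  qed
qed



lemma cesaro:
  fixes a :: "nat \<Rightarrow> real"
  assumes nn: "\<And>j. 0 \<le> a j" and lim: "a \<longlonglongrightarrow> 0"
  shows "(\<lambda>n. (\<Sum>j<n. a j) / real n) \<longlonglongrightarrow> 0"
proof (rule LIMSEQ_I)
  fix e :: real assume e: "0 < e"
  obtain N where N: "\<And>j. j \<ge> N \<Longrightarrow> norm (a j - 0) < e / 2"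
    using LIMSEQ_D[OF lim, of "e/2"] e by auto
  define S where "S = (\<Sum>j<N. a j)"
  have S0: "0 \<le> S" unfolding S_def by (intro sum_nonneg) (use nn in auto)
  obtain M :: nat where M: "2 * S / e < real M" using reals_Archimedean2 by blast
  have "norm ((\<Sum>j<n. a j) / real n - 0) < e" if n: "n \<ge> max (Suc N) (Suc M)" for n
  proof -
    have np: "real n > 0" using n by simp
    have split: "{..<n} = {..<N} \<union> {N..<n}" using n by auto
    have "(\<Sum>j<n. a j) = S + (\<Sum>j\<in>{N..<n}. a j)"
      unfolding S_def split by (rule sum.union_disjoint) auto
    also have "(\<Sum>j\<in>{N..<n}. a j) \<le> real (card {N..<n}) * (e / 2)"
    proof (rule sum_bounded_above)
      fix j assume "j \<in> {N..<n}"
      then have "norm (a j - 0) < e / 2" using N by auto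
      then show "a j \<le> e / 2" by simp
    qed
    also have "real (card {N..<n}) * (e / 2) \<le> real n * (e / 2)"
      using e by (intro mult_right_mono) auto
    finally have sum_le: "(\<Sum>j<n. a j) \<le> S + real n * (e / 2)" by simp
    have "S < real n * (e / 2)"
    proof -
      have "2 * S / e < real n" using M n by linarith
      then show ?thesis using e by (simp add: field_simps)
    qed
    then have "(\<Sum>j<n. a j) < real n * e" using sum_le by linarith
    moreover have "0 \<le> (\<Sum>j<n. a j)" by (intro sum_nonneg) (use nn in auto)
    ultimately show ?thesis using np by (simp add: pos_divide_less_eq mult.commute)
  qed
  then show "\<exists>no. \<forall>n\<ge>no. norm ((\<Sum>j<n. a j) / real n - 0) < e" by blast
qed

lemma hs_lip': "\<exists>Lc\<ge>0. \<forall>x y. \<bar>hs k x - hs k y\<bar> \<le> Lc * dist x y"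
proof -
  have nn: "0 \<le> (\<Sum>p\<in>set (from_nat k). lipc p)" by (intro sum_nonneg) (auto simp: lipc_def split: prod.splits)
  show ?thesis unfolding hs_def using hh_lip nn by blast
qed

lemma stable_conv:
  fixes f :: "'a::metric_space \<Rightarrow> 'a"
  assumes z: "z \<in> stable_set f y" and y: "y \<in> basin f \<mu>"
  shows "(\<lambda>n. emp_avg f z n (hs k)) \<longlonglongrightarrow> integral\<^sup>L \<mu> (hs k)"
proof -
  obtain Lc where Lc: "Lc \<ge> 0" "\<And>u v::'a. \<bar>hs k u - hs k v\<bar> \<le> Lc * dist u v" using hs_lip'[of k] by blast
  have ly: "(\<lambda>n. emp_avg f y n (hs k)) \<longlonglongrightarrow> integral\<^sup>L \<mu> (hs k)"
    using y hs_bcont[of k] unfolding basin_def by blast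
  have dz: "(\<lambda>j. dist ((f^^j) z) ((f^^j) y)) \<longlonglongrightarrow> 0" using z unfolding stable_set_def by simp
  have c: "(\<lambda>n. (\<Sum>j<n. Lc * dist ((f^^j) z) ((f^^j) y)) / real n) \<longlonglongrightarrow> 0"
    by (rule cesaro) (use Lc(1) tendsto_mult_right_zero[OF dz, of Lc] in auto)
  have diff: "(\<lambda>n. emp_avg f z n (hs k) - emp_avg f y n (hs k)) \<longlonglongrightarrow> 0"
  proof (rule Lim_null_comparison[OF _ c], rule always_eventually, rule allI)
    fix n
    have "emp_avg f z n (hs k) - emp_avg f y n (hs k) = (\<Sum>j<n. hs k ((f^^j) z) - hs k ((f^^j) y)) / real n"
      by (simp add: emp_avg_def sum_subtractf diff_divide_distrib)
    then have "norm (emp_avg f z n (hs k) - emp_avg f y n (hs k)) = \<bar>\<Sum>j<n. hs k ((f^^j) z) - hs k ((f^^j) y)\<bar> / real n"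
      by (simp add: abs_divide)
    also have "\<dots> \<le> (\<Sum>j<n. Lc * dist ((f^^j) z) ((f^^j) y)) / real n"
    proof (rule divide_right_mono)
      have "\<bar>\<Sum>j<n. hs k ((f^^j) z) - hs k ((f^^j) y)\<bar> \<le> (\<Sum>j<n. \<bar>hs k ((f^^j) z) - hs k ((f^^j) y)\<bar>)"
        by (rule sum_abs)
      also have "\<dots> \<le> (\<Sum>j<n. Lc * dist ((f^^j) z) ((f^^j) y))"
        by (rule sum_mono) (rule Lc(2))
      finally show "\<bar>\<Sum>j<n. hs k ((f^^j) z) - hs k ((f^^j) y)\<bar> \<le> (\<Sum>j<n. Lc * dist ((f^^j) z) ((f^^j) y))" .
    qed simp
    finally show "norm (emp_avg f z n (hs k) - emp_avg f y n (hs k)) \<le> (\<Sum>j<n. Lc * dist ((f^^j) z) ((f^^j) y)) / real n" .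
  qed
  have "(\<lambda>n. emp_avg f y n (hs k) + (emp_avg f z n (hs k) - emp_avg f y n (hs k))) \<longlonglongrightarrow> integral\<^sup>L \<mu> (hs k) + 0"
    by (rule tendsto_add[OF ly diff])
  then show ?thesis by simp
qed

lemma cont_funpow: "continuous_on UNIV (f::'a::topological_space \<Rightarrow> 'a) \<Longrightarrow> continuous_on UNIV (f ^^ n)"
proof (induction n)
  case 0
  have "continuous_on UNIV (\<lambda>x::'a. x)" by (rule continuous_on_id)
  then show ?case by (simp add: id_def)
next
  case (Suc n)
  have "continuous_on UNIV (f \<circ> (f ^^ n))"
    by (rule continuous_on_compose[OF Suc.IH[OF Suc.prems]]) (rule continuous_on_subset[OF Suc.prems], simp)
  then show ?case by simp
qed

lemma emp_avg_cont:
  assumes cont: "continuous_on UNIV f" and h: "continuous_on UNIV h"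
  shows "continuous_on UNIV (\<lambda>x. emp_avg f x n h)"
proof -
  have "continuous_on UNIV (\<lambda>x. h ((f^^j) x))" for j
  proof -
    have "continuous_on UNIV (h \<circ> (f ^^ j))"
      by (rule continuous_on_compose[OF cont_funpow[OF cont]]) (rule continuous_on_subset[OF h], simp)
    then show ?thesis by (simp add: comp_def)
  qed
  then have "continuous_on UNIV (\<lambda>x. (\<Sum>j<n. h ((f^^j) x)) * inverse (real n))"
    by (intro continuous_intros) auto
  then show ?thesis unfolding emp_avg_def by (simp add: divide_inverse)
qed

lemma emp_avg_mono: "(\<And>x. g x \<le> h x) \<Longrightarrow> emp_avg f x n g \<le> emp_avg f x n h"
  unfolding emp_avg_def by (intro divide_right_mono sum_mono) auto

lemma spec_crit:
  assumes sep: "separable_space (euclidean :: 'a::metric_space topology)" and mu: "\<mu> \<in> borel_probs"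
    and H: "\<And>K m N. \<exists>n\<ge>N. \<forall>k<K. \<bar>emp_avg f (x::'a) n (hs k) - integral\<^sup>L \<mu> (hs k)\<bar> < 1 / (real m + 1)"
  shows "\<mu> \<in> stat_spectrum f x"
proof -
  define Q where "Q j n \<longleftrightarrow> (\<forall>k<j. \<bar>emp_avg f x n (hs k) - integral\<^sup>L \<mu> (hs k)\<bar> < 1 / (real j + 1))" for j n
  have Qex: "\<exists>n\<ge>N. Q j n" for j N unfolding Q_def using H[of N j j] by blast
  define r where "r = rec_nat (SOME n. Q 0 n) (\<lambda>j rj. SOME n. n \<ge> Suc rj \<and> Q (Suc j) n)"
  have r0: "r 0 = (SOME n. Q 0 n)" and rS: "r (Suc j) = (SOME n. n \<ge> Suc (r j) \<and> Q (Suc j) n)" for j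
    by (simp_all add: r_def)
  have rQ: "Q j (r j) \<and> (\<forall>i. j = Suc i \<longrightarrow> r j > r i)" for j
  proof (cases j)
    case 0
    have "Q 0 (SOME n. Q 0 n)" by (rule someI_ex) (use Qex[of 0 0] in blast)
    then show ?thesis using 0 r0 by simp
  next
    case (Suc i)
    have "(SOME n. n \<ge> Suc (r i) \<and> Q (Suc i) n) \<ge> Suc (r i) \<and> Q (Suc i) (SOME n. n \<ge> Suc (r i) \<and> Q (Suc i) n)"
      by (rule someI_ex) (use Qex[of "Suc (r i)" "Suc i"] in blast)
    then show ?thesis using Suc rS[of i] by auto
  qed
  have sm: "strict_mono r" unfolding strict_mono_Suc_iff using rQ by blast
  have conv: "(\<lambda>j. emp_avg f x (r j) (hs k)) \<longlonglongrightarrow> integral\<^sup>L \<mu> (hs k)" for k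
  proof (rule LIMSEQ_I)
    fix e :: real assume e: "0 < e"
    obtain n0 :: nat where n0: "n0 > 0" "inverse (real n0) < e" using ex_inverse_of_nat_less[OF e] by blast
    have "norm (emp_avg f x (r j) (hs k) - integral\<^sup>L \<mu> (hs k)) < e" if j: "j \<ge> max (Suc k) n0" for j
    proof -
      have "\<bar>emp_avg f x (r j) (hs k) - integral\<^sup>L \<mu> (hs k)\<bar> < 1 / (real j + 1)"
        using conjunct1[OF rQ[of j]] j unfolding Q_def by auto
      also have "1 / (real j + 1) \<le> inverse (real n0)"
        using j n0(1) by (simp add: divide_simps)
      finally show ?thesis using n0(2) by simp
    qed
    then show "\<exists>no. \<forall>j\<ge>no. norm (emp_avg f x (r j) (hs k) - integral\<^sup>L \<mu> (hs k)) < e" by blast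
  qed
  have allg: "(\<lambda>j. emp_avg f x (r j) g) \<longlonglongrightarrow> integral\<^sup>L \<mu> g" if g: "g \<in> bcontinuous" for g
  proof (rule port[OF sep mu _ _ conv g])
    show "\<And>j g h. (\<And>x. g x \<le> h x) \<Longrightarrow> emp_avg f x (r j) g \<le> emp_avg f x (r j) h"
      by (rule emp_avg_mono)
    show "\<And>j g. emp_avg f x (r j) (\<lambda>x. - g x) = - emp_avg f x (r j) g" by (rule emp_avg_neg)
  qed
  show ?thesis
    unfolding stat_spectrum_def
  proof (intro CollectI conjI allI impI mu)
    fix G :: "('a \<Rightarrow> real) set" and e :: real
    assume Ge: "finite G \<and> G \<subseteq> bcontinuous \<and> 0 < e"
    have "\<forall>g\<in>G. eventually (\<lambda>j. \<bar>emp_avg f x (r j) g - integral\<^sup>L \<mu> g\<bar> < e) sequentially"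
    proof
      fix g assume "g \<in> G"
      then have "(\<lambda>j. emp_avg f x (r j) g) \<longlonglongrightarrow> integral\<^sup>L \<mu> g" using Ge allg by blast
      then show "eventually (\<lambda>j. \<bar>emp_avg f x (r j) g - integral\<^sup>L \<mu> g\<bar> < e) sequentially"
        using Ge unfolding LIMSEQ_iff eventually_sequentially by auto
    qed
    then have "eventually (\<lambda>j. \<forall>g\<in>G. \<bar>emp_avg f x (r j) g - integral\<^sup>L \<mu> g\<bar> < e) sequentially"
      using Ge by (intro eventually_ball_finite) auto
    then obtain J where J: "\<And>j. j \<ge> J \<Longrightarrow> \<forall>g\<in>G. \<bar>emp_avg f x (r j) g - integral\<^sup>L \<mu> g\<bar> < e"
      unfolding eventually_sequentially by blast
    show "\<exists>\<^sub>F n in sequentially. \<forall>g\<in>G. \<bar>emp_avg f x n g - integral\<^sup>L \<mu> g\<bar> < e"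
      unfolding frequently_sequentially
    proof
      fix N
      have "r (max J N) \<ge> max J N" by (rule seq_suble[OF sm])
      then show "\<exists>n\<ge>N. \<forall>g\<in>G. \<bar>emp_avg f x n g - integral\<^sup>L \<mu> g\<bar> < e"
        using J[of "max J N"] by (intro exI[of _ "r (max J N)"]) auto
    qed
  qed
qed



lemma part2:
  fixes f :: "'a::metric_space \<Rightarrow> 'a"
  assumes sep: "separable_space (euclidean :: 'a topology)" and cont: "continuous_on UNIV f"
    and erg: "\<mu> \<in> ergodic_probs f" and op: "outer_pos \<mu> X0"
  shows "\<mu> \<in> invariant_probs f \<and> basin f \<mu> \<inter> X0 \<noteq> {}"
proof -
  have inv: "\<mu> \<in> invariant_probs f" using erg by (simp add: ergodic_probs_def)
  have mu: "\<mu> \<in> borel_probs" using inv by (simp add: invariant_probs_def)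
  note I = inv_facts[OF inv cont]
  have "AE x in \<mu>. \<forall>k. (\<lambda>n. emp_avg f x n (hs k)) \<longlonglongrightarrow> integral\<^sup>L \<mu> (hs k)"
    unfolding AE_all_countable
  proof
    fix k
    obtain C where C: "\<forall>x::'a. \<bar>hs k x\<bar> \<le> C" using bcont_bound[OF hs_bcont[of k]] by blast
    show "AE x in \<mu>. (\<lambda>n. emp_avg f x n (hs k)) \<longlonglongrightarrow> integral\<^sup>L \<mu> (hs k)"
      by (rule birkhoff[OF erg cont bcont_meas[OF hs_bcont[of k]], of C]) (use C in blast)
  qed
  then obtain N where N: "{x \<in> space \<mu>. \<not> (\<forall>k. (\<lambda>n. emp_avg f x n (hs k)) \<longlonglongrightarrow> integral\<^sup>L \<mu> (hs k))} \<subseteq> N"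
    "emeasure \<mu> N = 0" "N \<in> sets \<mu>"
    by (rule AE_E)
  have "measure \<mu> N = 0" using N(2) by (simp add: measure_def)
  then have "\<not> X0 \<subseteq> N" using op N(3) unfolding outer_pos_def by blast
  then obtain x where x: "x \<in> X0" "x \<notin> N" by blast
  have P: "(\<lambda>n. emp_avg f x n (hs k)) \<longlonglongrightarrow> integral\<^sup>L \<mu> (hs k)" for k
    using N(1) x(2) I(3) by blast
  have "x \<in> basin f \<mu>"
    unfolding basin_def
  proof (intro CollectI ballI)
    fix g :: "'a \<Rightarrow> real" assume g: "g \<in> bcontinuous"
    show "(\<lambda>n. emp_avg f x n g) \<longlonglongrightarrow> integral\<^sup>L \<mu> g"
    proof (rule port[OF sep mu _ _ P g])
      show "\<And>j g h. (\<And>x. g x \<le> h x) \<Longrightarrow> emp_avg f x j g \<le> emp_avg f x j h"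
        by (rule emp_avg_mono)
      show "\<And>j g. emp_avg f x j (\<lambda>x. - g x) = - emp_avg f x j g" by (rule emp_avg_neg)
    qed
  qed
  then show ?thesis using inv x(1) by blast
qed

lemma half_eq: "2 / (real (2*m+1) + 1) = 1 / (real m + 1)"
  by (simp add: field_simps)

theorem proposition5p2:
  fixes f :: "'a::metric_space \<Rightarrow> 'a"
  assumes sep: "separable_space (euclidean :: 'a topology)"
    and baire: "baire_space TYPE('a)"
    and cont: "continuous_on UNIV f"
  defines "X0 \<equiv> {x. closure (stable_set f x) = UNIV}"
  shows "generically (\<lambda>x.
            {\<mu> \<in> invariant_probs f. basin f \<mu> \<inter> X0 \<noteq> {}} \<subseteq> stat_spectrum f x
          \<and> {\<mu> \<in> ergodic_probs f. outer_pos \<mu> X0}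
              \<subseteq> {\<mu> \<in> invariant_probs f. basin f \<mu> \<inter> X0 \<noteq> {}})"
proof -
  define S where "S = {\<mu> \<in> invariant_probs f. basin f \<mu> \<inter> X0 \<noteq> {}}"
  have P2: "{\<mu> \<in> ergodic_probs f. outer_pos \<mu> X0} \<subseteq> S"
    unfolding S_def using part2[OF sep cont] by blast
  have Sb: "\<mu> \<in> borel_probs" if "\<mu> \<in> S" for \<mu> using that by (simp add: S_def invariant_probs_def)
  define ok where "ok K m z \<mu> \<longleftrightarrow> (\<forall>k<K. \<bar>integral\<^sup>L \<mu> (hs k) - of_int (z!k) / (real m + 1)\<bar> < 1 / (real m + 1))"
    for K m :: nat and z :: "int list" and \<mu> :: "'a measure"
  define cand where "cand = (\<lambda>(K, m, z). SOME \<mu>. \<mu> \<in> S \<and> ok K m z \<mu>)"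
  define Dset where "Dset = cand ` {(K, m, z). \<exists>\<mu>\<in>S. ok K m z \<mu>}"
  have Dc: "countable Dset" unfolding Dset_def by (intro countable_image countableI_type)
  have cand_ok: "cand (K, m, z) \<in> S \<and> ok K m z (cand (K, m, z))" if "\<exists>\<mu>\<in>S. ok K m z \<mu>" for K m z
  proof -
    have "\<exists>\<mu>. \<mu> \<in> S \<and> ok K m z \<mu>" using that by blast
    then have "(SOME \<mu>. \<mu> \<in> S \<and> ok K m z \<mu>) \<in> S \<and> ok K m z (SOME \<mu>. \<mu> \<in> S \<and> ok K m z \<mu>)"
      by (rule someI_ex)
    then show ?thesis by (simp add: cand_def)
  qed
  have DS: "Dset \<subseteq> S" unfolding Dset_def using cand_ok by auto
  have Ddense: "\<exists>\<mu>'\<in>Dset. \<forall>k<K. \<bar>integral\<^sup>L \<mu>' (hs k) - integral\<^sup>L \<mu> (hs k)\<bar> < 1 / (real m + 1)"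
    if mu: "\<mu> \<in> S" for \<mu> K m
  proof -
    define M where "M = 2 * m + 1"
    define z where "z = map (\<lambda>k. \<lfloor>integral\<^sup>L \<mu> (hs k) * (real M + 1)\<rfloor>) [0..<K]"
    have okz: "ok K M z \<mu>" unfolding ok_def
    proof (intro allI impI)
      fix k assume k: "k < K"
      define t where "t = integral\<^sup>L \<mu> (hs k) * (real M + 1)"
      have zk: "z ! k = \<lfloor>t\<rfloor>" using k by (simp add: z_def t_def)
      have f1: "of_int \<lfloor>t\<rfloor> \<le> t" "t < of_int \<lfloor>t\<rfloor> + 1" by linarith+
      have Mp: "real M + 1 > 0" by simp
      have "integral\<^sup>L \<mu> (hs k) - of_int \<lfloor>t\<rfloor> / (real M + 1) = (t - of_int \<lfloor>t\<rfloor>) / (real M + 1)"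
        using Mp by (simp add: t_def field_simps)
      moreover have "0 \<le> (t - of_int \<lfloor>t\<rfloor>) / (real M + 1)" using f1 Mp by simp
      moreover have "(t - of_int \<lfloor>t\<rfloor>) / (real M + 1) < 1 / (real M + 1)"
        by (rule divide_strict_right_mono[OF _ Mp]) (use f1 in linarith)
      ultimately show "\<bar>integral\<^sup>L \<mu> (hs k) - of_int (z ! k) / (real M + 1)\<bar> < 1 / (real M + 1)"
        unfolding zk by linarith
    qed
    then have ex: "\<exists>\<mu>\<in>S. ok K M z \<mu>" using mu by blast
    define \<mu>' where "\<mu>' = cand (K, M, z)"
    have mD: "\<mu>' \<in> Dset" unfolding \<mu>'_def Dset_def using ex by blast
    have okm: "ok K M z \<mu>'" using cand_ok[OF ex] by (simp add: \<mu>'_def)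
    have "\<bar>integral\<^sup>L \<mu>' (hs k) - integral\<^sup>L \<mu> (hs k)\<bar> < 1 / (real m + 1)" if k: "k < K" for k
    proof -
      have a: "\<bar>integral\<^sup>L \<mu>' (hs k) - of_int (z!k) / (real M + 1)\<bar> < 1 / (real M + 1)"
        using okm k by (simp add: ok_def)
      have b: "\<bar>integral\<^sup>L \<mu> (hs k) - of_int (z!k) / (real M + 1)\<bar> < 1 / (real M + 1)"
        using okz k by (simp add: ok_def)
      have "\<bar>integral\<^sup>L \<mu>' (hs k) - integral\<^sup>L \<mu> (hs k)\<bar> < 2 / (real M + 1)" using a b by linarith
      then show ?thesis unfolding M_def half_eq .
    qed
    then show ?thesis using mD by blast
  qed
  define V where "V \<mu>' K m N = {x. \<exists>n\<ge>N. \<forall>k<K. \<bar>emp_avg f x n (hs k) - integral\<^sup>L \<mu>' (hs k)\<bar> < 1 / (real m + 1)}"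
    for \<mu>' :: "'a measure" and K m N :: nat
  have Vopen: "open (V \<mu>' K m N)" for \<mu>' K m N
  proof -
    have eq: "V \<mu>' K m N = (\<Union>n\<in>{N..}. \<Inter>k\<in>{..<K}. {x. \<bar>emp_avg f x n (hs k) - integral\<^sup>L \<mu>' (hs k)\<bar> < 1 / (real m + 1)})"
      unfolding V_def by auto
    have "open {x. \<bar>emp_avg f x n (hs k) - integral\<^sup>L \<mu>' (hs k)\<bar> < 1 / (real m + 1)}" for n k
    proof (rule open_Collect_less)
      have "(hs k :: 'a \<Rightarrow> real) \<in> bcontinuous" by (rule hs_bcont)
      then have hk: "continuous_on UNIV (hs k :: 'a \<Rightarrow> real)" by (simp add: bcontinuous_def)
      have "continuous_on UNIV (\<lambda>x. emp_avg f x n (hs k))" by (rule emp_avg_cont[OF cont hk])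
      then show "continuous_on UNIV (\<lambda>x. \<bar>emp_avg f x n (hs k) - integral\<^sup>L \<mu>' (hs k)\<bar>)"
        by (intro continuous_intros)
    qed (rule continuous_on_const)
    then show ?thesis unfolding eq by (intro open_UN ballI open_INT) auto
  qed
  have Vdense: "closure (V \<mu>' K m N) = UNIV" if m': "\<mu>' \<in> S" for \<mu>' K m N
  proof -
    obtain y where y: "y \<in> basin f \<mu>'" "y \<in> X0" using m' unfolding S_def by blast
    have cy: "closure (stable_set f y) = UNIV" using y(2) by (simp add: X0_def)
    have "stable_set f y \<subseteq> V \<mu>' K m N"
    proof
      fix z assume z: "z \<in> stable_set f y"
      have "\<forall>k\<in>{..<K}. eventually (\<lambda>n. \<bar>emp_avg f z n (hs k) - integral\<^sup>L \<mu>' (hs k)\<bar> < 1 / (real m + 1)) sequentially"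
      proof
        fix k
        have "(\<lambda>n. emp_avg f z n (hs k)) \<longlonglongrightarrow> integral\<^sup>L \<mu>' (hs k)" by (rule stable_conv[OF z y(1)])
        then show "eventually (\<lambda>n. \<bar>emp_avg f z n (hs k) - integral\<^sup>L \<mu>' (hs k)\<bar> < 1 / (real m + 1)) sequentially"
          unfolding LIMSEQ_iff eventually_sequentially by simp
      qed
      then have "eventually (\<lambda>n. \<forall>k\<in>{..<K}. \<bar>emp_avg f z n (hs k) - integral\<^sup>L \<mu>' (hs k)\<bar> < 1 / (real m + 1)) sequentially"
        by (intro eventually_ball_finite) auto
      then obtain n0 where n0: "\<And>n. n \<ge> n0 \<Longrightarrow> \<forall>k\<in>{..<K}. \<bar>emp_avg f z n (hs k) - integral\<^sup>L \<mu>' (hs k)\<bar> < 1 / (real m + 1)"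
        unfolding eventually_sequentially by blast
      show "z \<in> V \<mu>' K m N" unfolding V_def using n0[of "max n0 N"] by (intro CollectI exI[of _ "max n0 N"]) auto
    qed
    then have "closure (stable_set f y) \<subseteq> closure (V \<mu>' K m N)" by (rule closure_mono)
    then show ?thesis using cy by auto
  qed
  have nd: "nowhere_dense (- V \<mu>' K m N)" if "\<mu>' \<in> S" for \<mu>' K m N
  proof -
    have "closure (- V \<mu>' K m N) = - V \<mu>' K m N" using Vopen[of \<mu>' K m N] by (simp add: closed_Compl)
    then show ?thesis unfolding nowhere_dense_def using Vdense[OF that, of K m N]
      by (simp add: interior_complement)
  qed
  define Fam where "Fam = (\<lambda>(\<mu>', K, m, N). - V \<mu>' K m N) ` (Dset \<times> (UNIV::nat set) \<times> (UNIV::nat set) \<times> (UNIV::nat set))"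
  have Fc: "countable Fam" unfolding Fam_def using Dc by (intro countable_image countable_SIGMA countableI_type)
  have Fnd: "\<forall>T\<in>Fam. nowhere_dense T" unfolding Fam_def using nd DS by auto
  have cover: "{x. \<not> (S \<subseteq> stat_spectrum f x \<and> {\<mu> \<in> ergodic_probs f. outer_pos \<mu> X0} \<subseteq> S)} \<subseteq> \<Union>Fam"
  proof
    fix x assume "x \<in> {x. \<not> (S \<subseteq> stat_spectrum f x \<and> {\<mu> \<in> ergodic_probs f. outer_pos \<mu> X0} \<subseteq> S)}"
    then have nx: "\<not> S \<subseteq> stat_spectrum f x" using P2 by blast
    show "x \<in> \<Union>Fam"
    proof (rule ccontr)
      assume "x \<notin> \<Union>Fam"
      then have inV: "x \<in> V \<mu>' K m N" if "\<mu>' \<in> Dset" for \<mu>' K m N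
        using that unfolding Fam_def by blast
      have "S \<subseteq> stat_spectrum f x"
      proof
        fix \<mu> assume mu: "\<mu> \<in> S"
        show "\<mu> \<in> stat_spectrum f x"
        proof (rule spec_crit[OF sep Sb[OF mu]])
          fix K m N
          obtain \<mu>' where m': "\<mu>' \<in> Dset" "\<forall>k<K. \<bar>integral\<^sup>L \<mu>' (hs k) - integral\<^sup>L \<mu> (hs k)\<bar> < 1 / (real (2*m+1) + 1)"
            using Ddense[OF mu, of K "2*m+1"] by blast
          obtain n where n: "n \<ge> N" "\<forall>k<K. \<bar>emp_avg f x n (hs k) - integral\<^sup>L \<mu>' (hs k)\<bar> < 1 / (real (2*m+1) + 1)"
            using inV[OF m'(1), of K "2*m+1" N] unfolding V_def by blast
          have "\<bar>emp_avg f x n (hs k) - integral\<^sup>L \<mu> (hs k)\<bar> < 1 / (real m + 1)" if k: "k < K" for k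
          proof -
            have "\<bar>emp_avg f x n (hs k) - integral\<^sup>L \<mu> (hs k)\<bar> < 2 / (real (2*m+1) + 1)"
              using n(2) m'(2) k by fastforce
            then show ?thesis unfolding half_eq .
          qed
          then show "\<exists>n\<ge>N. \<forall>k<K. \<bar>emp_avg f x n (hs k) - integral\<^sup>L \<mu> (hs k)\<bar> < 1 / (real m + 1)"
            using n(1) by blast
        qed
      qed
      then show False using nx by blast
    qed
  qed
  show ?thesis
    unfolding generically_def meager_def S_def[symmetric]
    using Fc Fnd cover by blast
qed


end
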